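(* Let $\Gamma\subseteq A$ be $\Bbbk$-algebras, $\sim$ an equivalence relation on $\mathrm{cfs}(\Gamma)$, with $\Gamma$ a Harish-Chandra block subalgebra of $A$, and let $V$ be a Harish-Chandra block module. Then: (i) if $\mathcal D\subseteq\mathrm{cfs}(\Gamma)/{\sim}$ is $\prec$-closed (i.e. $B\in\mathcal D$ and $B\prec C$ imply $C\in\mathcal D$), then $V(\mathcal D):=\bigoplus_{B\in\mathcal D}V(B)$ is an $A$-submodule of $V$; (ii) $V=\bigoplus_{\mathcal D\in(\mathrm{cfs}(\Gamma)/{\sim})/\Delta}V(\mathcal D)$ as $A$-modules; (iii) if $V$ is indecomposable and $B\in\mathrm{Supp}(V)$, then $\mathrm{Supp}(V)$ is contained in the $\Delta$-class of $B$; (iv) if $V$ is irreducible and $B\in\mathrm{Supp}(V)$, then $\mathrm{Supp}(V)$ is contained in the $\nabla$-class of $B$.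
   Context: $\mathrm{cfs}(\Gamma)$: maximal two-sided ideals $\mathfrak m$ with $\dim\Gamma/\mathfrak m<\infty$. For a class $B$, $\mathcal W(B)=\{\mathfrak m_1\cdots\mathfrak m_k:k\ge0,\mathfrak m_i\in B\}$; for a $\Gamma$-module $V$, $V(B)=\{v:\mathfrak mv=0$ for some $\mathfrak m\in\mathcal W(B)\}$; $V$ is a block module if $V=\bigoplus_BV(B)$; $\mathrm{Supp}(V)=\{B:V(B)\ne0\}$. A Harish-Chandra block module is an $A$-module that is a block module over $\Gamma$. $\Gamma$ is a Harish-Chandra block subalgebra of $A$ if $A/A\mathfrak m$ is a block module for every $B$ and $\mathfrak m\in\mathcal W(B)$. $\prec$ is the preorder on $\mathrm{cfs}(\Gamma)/{\sim}$ generated by $B\prec C$ whenever $C\in\mathrm{Supp}(A/A\mathfrak m)$ for some $\mathfrak m\in B$; $\Delta$ is the equivalence relation generated by $\prec$ and $\nabla$ the equivalence relation induced by $\prec$ ($B\nabla C$ iff $B\prec C$ and $C\prec B$). *)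

theory Defs
  imports Main
begin

text \<open>Setting: \<open>A\<close> is a ring (type \<open>'a\<close>), made into a \<open>k\<close>-algebra by a unital ring
  homomorphism \<open>sc :: 'k \<Rightarrow> 'a\<close> with central image (scalar multiplication \<open>c \<cdot> a = sc c * a\<close>).
  \<open>\<Gamma>\<close> is a subset \<open>G\<close> of \<open>A\<close> that is a (unital) \<open>k\<close>-subalgebra.\<close>

definition is_kalg_hom :: "('k::field \<Rightarrow> 'a::ring_1) \<Rightarrow> bool" where
  "is_kalg_hom sc \<longleftrightarrow> (\<forall>c d. sc (c + d) = sc c + sc d) \<and> (\<forall>c d. sc (c * d) = sc c * sc d)
     \<and> sc 1 = 1 \<and> (\<forall>c x. sc c * x = x * sc c)"

definition subalg :: "('k::field \<Rightarrow> 'a::ring_1) \<Rightarrow> 'a set \<Rightarrow> bool" where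
  "subalg sc G \<longleftrightarrow> range sc \<subseteq> G \<and> (\<forall>x\<in>G. \<forall>y\<in>G. x + y \<in> G \<and> x * y \<in> G) \<and> (\<forall>x\<in>G. - x \<in> G)"

definition is_module :: "('a::ring_1 \<Rightarrow> 'v::ab_group_add \<Rightarrow> 'v) \<Rightarrow> bool" where
  "is_module act \<longleftrightarrow> (\<forall>a b v. act (a + b) v = act a v + act b v) \<and> (\<forall>a v w. act a (v + w) = act a v + act a w)
     \<and> (\<forall>a b v. act (a * b) v = act a (act b v)) \<and> (\<forall>v. act 1 v = v)"

definition is_submod :: "('a::ring_1 \<Rightarrow> 'v::ab_group_add \<Rightarrow> 'v) \<Rightarrow> 'v set \<Rightarrow> bool" where
  "is_submod act S \<longleftrightarrow> 0 \<in> S \<and> (\<forall>x\<in>S. \<forall>y\<in>S. x + y \<in> S) \<and> (\<forall>a. \<forall>x\<in>S. act a x \<in> S)"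

definition two_sided_ideal :: "'a::ring_1 set \<Rightarrow> 'a set \<Rightarrow> bool" where
  "two_sided_ideal G m \<longleftrightarrow> m \<subseteq> G \<and> 0 \<in> m \<and> (\<forall>x\<in>m. \<forall>y\<in>m. x + y \<in> m) \<and> (\<forall>x\<in>m. - x \<in> m)
     \<and> (\<forall>g\<in>G. \<forall>x\<in>m. g * x \<in> m \<and> x * g \<in> m)"

definition maximal_ideal :: "'a::ring_1 set \<Rightarrow> 'a set \<Rightarrow> bool" where
  "maximal_ideal G m \<longleftrightarrow> two_sided_ideal G m \<and> m \<noteq> G
     \<and> (\<forall>J. two_sided_ideal G J \<and> m \<subseteq> J \<longrightarrow> J = m \<or> J = G)"

text \<open>\<open>dim\<^sub>k (\<Gamma>/m) < \<infinity>\<close>: \<open>\<Gamma>\<close> is spanned modulo \<open>m\<close> by finitely many elements.\<close>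
definition fin_codim :: "('k::field \<Rightarrow> 'a::ring_1) \<Rightarrow> 'a set \<Rightarrow> 'a set \<Rightarrow> bool" where
  "fin_codim sc G m \<longleftrightarrow> (\<exists>S. finite S \<and> S \<subseteq> G \<and> (\<forall>g\<in>G. \<exists>c. g - (\<Sum>s\<in>S. sc (c s) * s) \<in> m))"

definition cfs :: "('k::field \<Rightarrow> 'a::ring_1) \<Rightarrow> 'a set \<Rightarrow> 'a set set" where
  "cfs sc G = {m. maximal_ideal G m \<and> fin_codim sc G m}"

definition blocks :: "('k::field \<Rightarrow> 'a::ring_1) \<Rightarrow> 'a set \<Rightarrow> ('a set \<times> 'a set) set \<Rightarrow> 'a set set set" where
  "blocks sc G R = cfs sc G // R"

definition ideal_prod :: "'a::ring_1 set \<Rightarrow> 'a set \<Rightarrow> 'a set" where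
  "ideal_prod I J = {\<Sum>i<n. x i * y i | (n::nat) x y. \<forall>i<n. x i \<in> I \<and> y i \<in> J}"

text \<open>\<open>\<W>(B)\<close>: products \<open>m\<^sub>1\<cdots>m\<^sub>k\<close>, \<open>k \<ge> 0\<close>, \<open>m\<^sub>i \<in> B\<close> (empty product = \<open>\<Gamma>\<close>).\<close>
inductive_set Wset :: "'a::ring_1 set \<Rightarrow> 'a set set \<Rightarrow> 'a set set" for G B where
  W_unit: "G \<in> Wset G B"
| W_mult: "m \<in> Wset G B \<Longrightarrow> n \<in> B \<Longrightarrow> ideal_prod m n \<in> Wset G B"

definition left_ideal_gen :: "'a::ring_1 set \<Rightarrow> 'a set" where
  "left_ideal_gen m = {\<Sum>i<n. a i * x i | (n::nat) a x. \<forall>i<n. x i \<in> m}"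

text \<open>Block component of a quotient module \<open>M/N\<close> (\<open>M\<close> = the whole type), given as the preimage
  in \<open>M\<close>: \<open>(M/N)(B) = comp act N G B / N\<close>.\<close>
definition comp :: "('a::ring_1 \<Rightarrow> 'v::ab_group_add \<Rightarrow> 'v) \<Rightarrow> 'v set \<Rightarrow> 'a set \<Rightarrow> 'a set set \<Rightarrow> 'v set" where
  "comp act N G B = {v. \<exists>m\<in>Wset G B. \<forall>x\<in>m. act x v \<in> N}"

definition is_block_mod :: "('k::field \<Rightarrow> 'a::ring_1) \<Rightarrow> 'a set \<Rightarrow> ('a set \<times> 'a set) set
    \<Rightarrow> ('a \<Rightarrow> 'v::ab_group_add \<Rightarrow> 'v) \<Rightarrow> 'v set \<Rightarrow> bool" where
  "is_block_mod sc G R act N \<longleftrightarrow>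
     (\<forall>v. \<exists>F f. finite F \<and> F \<subseteq> blocks sc G R \<and> (\<forall>B\<in>F. f B \<in> comp act N G B) \<and> v - sum f F \<in> N)
   \<and> (\<forall>F f. finite F \<and> F \<subseteq> blocks sc G R \<and> (\<forall>B\<in>F. f B \<in> comp act N G B) \<and> sum f F \<in> N
        \<longrightarrow> (\<forall>B\<in>F. f B \<in> N))"

definition supp :: "('k::field \<Rightarrow> 'a::ring_1) \<Rightarrow> 'a set \<Rightarrow> ('a set \<times> 'a set) set
    \<Rightarrow> ('a \<Rightarrow> 'v::ab_group_add \<Rightarrow> 'v) \<Rightarrow> 'v set \<Rightarrow> 'a set set set" where
  "supp sc G R act N = {B \<in> blocks sc G R. \<exists>v\<in>comp act N G B. v \<notin> N}"

definition HC_block_subalg :: "('k::field \<Rightarrow> 'a::ring_1) \<Rightarrow> 'a set \<Rightarrow> ('a set \<times> 'a set) set \<Rightarrow> bool" where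
  "HC_block_subalg sc G R \<longleftrightarrow>
     (\<forall>B\<in>blocks sc G R. \<forall>m\<in>Wset G B. is_block_mod sc G R (*) (left_ideal_gen m))"

definition HC_block_module :: "('k::field \<Rightarrow> 'a::ring_1) \<Rightarrow> 'a set \<Rightarrow> ('a set \<times> 'a set) set
    \<Rightarrow> ('a \<Rightarrow> 'v::ab_group_add \<Rightarrow> 'v) \<Rightarrow> bool" where
  "HC_block_module sc G R act \<longleftrightarrow> is_module act \<and> is_block_mod sc G R act {0}"

definition prec_base :: "('k::field \<Rightarrow> 'a::ring_1) \<Rightarrow> 'a set \<Rightarrow> ('a set \<times> 'a set) set
    \<Rightarrow> ('a set set \<times> 'a set set) set" where
  "prec_base sc G R = {(B, C). B \<in> blocks sc G R \<and> C \<in> blocks sc G R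
      \<and> (\<exists>m\<in>B. C \<in> supp sc G R (*) (left_ideal_gen m))}"

definition prec :: "('k::field \<Rightarrow> 'a::ring_1) \<Rightarrow> 'a set \<Rightarrow> ('a set \<times> 'a set) set
    \<Rightarrow> ('a set set \<times> 'a set set) set" where
  "prec sc G R = Id_on (blocks sc G R) \<union> (prec_base sc G R)\<^sup>+"

definition Delta :: "('k::field \<Rightarrow> 'a::ring_1) \<Rightarrow> 'a set \<Rightarrow> ('a set \<times> 'a set) set
    \<Rightarrow> ('a set set \<times> 'a set set) set" where
  "Delta sc G R = Id_on (blocks sc G R) \<union> (prec_base sc G R \<union> (prec_base sc G R)\<inverse>)\<^sup>+"

definition Nabla :: "('k::field \<Rightarrow> 'a::ring_1) \<Rightarrow> 'a set \<Rightarrow> ('a set \<times> 'a set) set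
    \<Rightarrow> ('a set set \<times> 'a set set) set" where
  "Nabla sc G R = prec sc G R \<inter> (prec sc G R)\<inverse>"

definition VD :: "('a::ring_1 \<Rightarrow> 'v::ab_group_add \<Rightarrow> 'v) \<Rightarrow> 'a set \<Rightarrow> 'a set set set \<Rightarrow> 'v set" where
  "VD act G D = {sum f F | F f. finite F \<and> F \<subseteq> D \<and> (\<forall>B\<in>F. f B \<in> comp act {0} G B)}"

definition is_dsum :: "'i set \<Rightarrow> ('i \<Rightarrow> 'v::ab_group_add set) \<Rightarrow> bool" where
  "is_dsum I X \<longleftrightarrow>
     (\<forall>v. \<exists>F f. finite F \<and> F \<subseteq> I \<and> (\<forall>i\<in>F. f i \<in> X i) \<and> v = sum f F)
   \<and> (\<forall>F f. finite F \<and> F \<subseteq> I \<and> (\<forall>i\<in>F. f i \<in> X i) \<and> sum f F = 0 \<longrightarrow> (\<forall>i\<in>F. f i = 0))"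

definition indecomposable :: "('a::ring_1 \<Rightarrow> 'v::ab_group_add \<Rightarrow> 'v) \<Rightarrow> bool" where
  "indecomposable act \<longleftrightarrow> (\<exists>v::'v. v \<noteq> 0) \<and>
     \<not> (\<exists>S T. is_submod act S \<and> is_submod act T \<and> S \<noteq> {0} \<and> T \<noteq> {0} \<and> S \<inter> T = {0}
            \<and> (\<forall>v. \<exists>s\<in>S. \<exists>t\<in>T. v = s + t))"

definition irreducible_mod :: "('a::ring_1 \<Rightarrow> 'v::ab_group_add \<Rightarrow> 'v) \<Rightarrow> bool" where
  "irreducible_mod act \<longleftrightarrow> (\<exists>v::'v. v \<noteq> 0) \<and> (\<forall>S. is_submod act S \<longrightarrow> S = {0} \<or> S = UNIV)"

end

theory Submission
  imports Defs
begin


lemma sum_concat: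
  fixes f g :: "nat \<Rightarrow> 'b::comm_monoid_add"
  shows "(\<Sum>i<n. f i) + (\<Sum>i<k. g i) = (\<Sum>i<n+k. if i < n then f i else g (i - n))"
proof (induction k)
  case 0 then show ?case by simp
next
  case (Suc k)
  have "(\<Sum>i<n + Suc k. if i < n then f i else g (i - n))
      = (\<Sum>i<n+k. if i < n then f i else g (i - n)) + g k" by simp
  then show ?case using Suc by (simp add: add.assoc[symmetric])
qed

lemma ideal_sum:
  fixes k :: nat
  assumes "two_sided_ideal G I" "\<forall>i<k. h i \<in> I"
  shows "(\<Sum>i<k. h i) \<in> I"
  using assms(2)
proof (induction k)
  case 0 then show ?case using assms(1) by (simp add: two_sided_ideal_def)
next
  case (Suc k) then show ?case using assms(1) by (simp add: two_sided_ideal_def)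
qed

lemma ideal_prod_intro:
  fixes n :: nat
  assumes "u = (\<Sum>i<n. x i * y i)" "\<forall>i<n. x i \<in> I \<and> y i \<in> J"
  shows "u \<in> ideal_prod I J"
  unfolding ideal_prod_def using assms by blast

lemma ideal_prod_add:
  assumes "u \<in> ideal_prod I J" "w \<in> ideal_prod I J"
  shows "u + w \<in> ideal_prod I J"
proof -
  obtain n :: nat and x y where u: "u = (\<Sum>i<n. x i * y i)" "\<forall>i<n. x i \<in> I \<and> y i \<in> J"
    using assms(1) unfolding ideal_prod_def by blast
  obtain k :: nat and x' y' where w: "w = (\<Sum>i<k. x' i * y' i)" "\<forall>i<k. x' i \<in> I \<and> y' i \<in> J"
    using assms(2) unfolding ideal_prod_def by blast
  define X where "X i = (if i < n then x i else x' (i - n))" for i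
  define Y where "Y i = (if i < n then y i else y' (i - n))" for i
  have "u + w = (\<Sum>i<n+k. X i * Y i)"
    unfolding u w sum_concat X_def Y_def by (rule sum.cong) auto
  moreover have "\<forall>i<n+k. X i \<in> I \<and> Y i \<in> J"
    using u w unfolding X_def Y_def by auto
  ultimately show ?thesis by (rule ideal_prod_intro)
qed

lemma ideal_prod_ideal:
  assumes I: "two_sided_ideal G I" and J: "two_sided_ideal G J"
  shows "two_sided_ideal G (ideal_prod I J)"
proof -
  have sub: "ideal_prod I J \<subseteq> I"
  proof
    fix u assume "u \<in> ideal_prod I J"
    then obtain n :: nat and x y where u: "u = (\<Sum>i<n. x i * y i)" "\<forall>i<n. x i \<in> I \<and> y i \<in> J"
      unfolding ideal_prod_def by blast
    have "\<forall>i<n. x i * y i \<in> I" using u I J unfolding two_sided_ideal_def by blast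
    then show "u \<in> I" using ideal_sum[OF I, of n "\<lambda>i. x i * y i"] u by simp
  qed
  have zero: "0 \<in> ideal_prod I J" unfolding ideal_prod_def mem_Collect_eq
    by (rule exI[of _ 0]) simp
  have neg: "- u \<in> ideal_prod I J" if hu: "u \<in> ideal_prod I J" for u
  proof -
    obtain n :: nat and x y where u: "u = (\<Sum>i<n. x i * y i)" "\<forall>i<n. x i \<in> I \<and> y i \<in> J"
      using hu unfolding ideal_prod_def by blast
    have "- u = (\<Sum>i<n. (- x i) * y i)" unfolding u by (simp add: sum_negf)
    moreover have "\<forall>i<n. - x i \<in> I \<and> y i \<in> J" using u I unfolding two_sided_ideal_def by blast
    ultimately show ?thesis by (rule ideal_prod_intro)
  qed
  have lm: "g * u \<in> ideal_prod I J" if hu: "u \<in> ideal_prod I J" and hg: "g \<in> G" for u g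
  proof -
    obtain n :: nat and x y where u: "u = (\<Sum>i<n. x i * y i)" "\<forall>i<n. x i \<in> I \<and> y i \<in> J"
      using hu unfolding ideal_prod_def by blast
    have "g * u = (\<Sum>i<n. (g * x i) * y i)" unfolding u by (simp add: sum_distrib_left mult.assoc)
    moreover have "\<forall>i<n. g * x i \<in> I \<and> y i \<in> J" using u I hg unfolding two_sided_ideal_def by blast
    ultimately show ?thesis by (rule ideal_prod_intro)
  qed
  have rm: "u * g \<in> ideal_prod I J" if hu: "u \<in> ideal_prod I J" and hg: "g \<in> G" for u g
  proof -
    obtain n :: nat and x y where u: "u = (\<Sum>i<n. x i * y i)" "\<forall>i<n. x i \<in> I \<and> y i \<in> J"
      using hu unfolding ideal_prod_def by blast
    have "u * g = (\<Sum>i<n. x i * (y i * g))" unfolding u by (simp add: sum_distrib_right mult.assoc)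
    moreover have "\<forall>i<n. x i \<in> I \<and> y i * g \<in> J" using u J hg unfolding two_sided_ideal_def by blast
    ultimately show ?thesis by (rule ideal_prod_intro)
  qed
  have "ideal_prod I J \<subseteq> G" using sub I unfolding two_sided_ideal_def by blast
  then show ?thesis unfolding two_sided_ideal_def
    using zero neg lm rm ideal_prod_add[of _ I J] by simp
qed

lemma ideal_prod_sub_left:
  assumes I: "two_sided_ideal G I" and J: "J \<subseteq> G"
  shows "ideal_prod I J \<subseteq> I"
proof
  fix u assume "u \<in> ideal_prod I J"
  then obtain n :: nat and x y where u: "u = (\<Sum>i<n. x i * y i)" "\<forall>i<n. x i \<in> I \<and> y i \<in> J"
    unfolding ideal_prod_def by blast
  have "\<forall>i<n. x i * y i \<in> I" using u I J unfolding two_sided_ideal_def by blast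
  then show "u \<in> I" using ideal_sum[OF I, of n "\<lambda>i. x i * y i"] u by simp
qed

lemma ideal_prod_sub_right:
  assumes I: "I \<subseteq> G" and J: "two_sided_ideal G J"
  shows "ideal_prod I J \<subseteq> J"
proof
  fix u assume "u \<in> ideal_prod I J"
  then obtain n :: nat and x y where u: "u = (\<Sum>i<n. x i * y i)" "\<forall>i<n. x i \<in> I \<and> y i \<in> J"
    unfolding ideal_prod_def by blast
  have "\<forall>i<n. x i * y i \<in> J" using u I J unfolding two_sided_ideal_def by blast
  then show "u \<in> J" using ideal_sum[OF J, of n "\<lambda>i. x i * y i"] u by simp
qed

lemma ideal_prod_mono: "I \<subseteq> I' \<Longrightarrow> ideal_prod I J \<subseteq> ideal_prod I' J"
  unfolding ideal_prod_def by blast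

lemma ideal_prod_single: "x \<in> I \<Longrightarrow> y \<in> J \<Longrightarrow> x * y \<in> ideal_prod I J"
  unfolding ideal_prod_def mem_Collect_eq
  by (rule exI[of _ 1], rule exI[of _ "\<lambda>_. x"], rule exI[of _ "\<lambda>_. y"]) simp

lemma ideal_prod_G:
  assumes "1 \<in> G" "two_sided_ideal G J"
  shows "ideal_prod G J = J"
proof
  show "ideal_prod G J \<subseteq> J" by (rule ideal_prod_sub_right) (use assms in auto)
  show "J \<subseteq> ideal_prod G J"
  proof
    fix y assume "y \<in> J"
    then have "1 * y \<in> ideal_prod G J" by (rule ideal_prod_single[OF assms(1)])
    then show "y \<in> ideal_prod G J" by simp
  qed
qed

lemma Wset_ideal:
  assumes "two_sided_ideal G G" "\<forall>n\<in>B. two_sided_ideal G n" "m \<in> Wset G B"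
  shows "two_sided_ideal G m"
  using assms(3) by induction (use assms ideal_prod_ideal in auto)

lemma W_meet:
  assumes GG: "two_sided_ideal G G" and BB: "\<forall>n\<in>B. two_sided_ideal G n"
    and m1: "m1 \<in> Wset G B" and m2: "m2 \<in> Wset G B"
  shows "\<exists>m3\<in>Wset G B. m3 \<subseteq> m1 \<and> m3 \<subseteq> m2"
  using m2
proof induction
  case W_unit
  then show ?case using m1 Wset_ideal[OF GG BB m1] unfolding two_sided_ideal_def by blast
next
  case (W_mult m n)
  from W_mult.IH obtain k where k1: "k \<in> Wset G B" and k2: "k \<subseteq> m1" and k3: "k \<subseteq> m" by blast
  have kI: "two_sided_ideal G k" using Wset_ideal[OF GG BB k1] .
  from W_mult have nB: "n \<in> B" by simp
  have nG: "n \<subseteq> G" using BB nB by (simp add: two_sided_ideal_def)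
  have a: "ideal_prod k n \<in> Wset G B" using k1 nB by (rule Wset.W_mult)
  have b: "ideal_prod k n \<subseteq> k" using kI nG by (rule ideal_prod_sub_left)
  have c: "ideal_prod k n \<subseteq> ideal_prod m n" using k3 by (rule ideal_prod_mono)
  show ?case using a b c k2 by blast
qed




locale HC =
  fixes sc :: "'k::field \<Rightarrow> 'a::ring_1" and G :: "'a set" and R :: "('a set \<times> 'a set) set"
    and act :: "'a \<Rightarrow> 'v::ab_group_add \<Rightarrow> 'v"
  assumes alg: "is_kalg_hom sc"
    and sub: "subalg sc G"
    and eqv: "equiv (cfs sc G) R"
    and hc: "HC_block_subalg sc G R"
    and V: "HC_block_module sc G R act"
begin

abbreviation "blk \<equiv> blocks sc G R"
abbreviation "cp B \<equiv> comp act {0} G B"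
abbreviation "VV D \<equiv> VD act G D"

lemma modl: "is_module act" using V unfolding HC_block_module_def by blast
lemma Vblock: "is_block_mod sc G R act {0}" using V unfolding HC_block_module_def by blast

lemma act_add_l: "act (a + b) v = act a v + act b v" using modl unfolding is_module_def by blast
lemma act_add_r: "act a (v + w) = act a v + act a w" using modl unfolding is_module_def by blast
lemma act_mult: "act (a * b) v = act a (act b v)" using modl unfolding is_module_def by blast
lemma act_one: "act 1 v = v" using modl unfolding is_module_def by blast

lemma act_zero_r: "act a 0 = 0"
  by (metis act_add_r add_cancel_right_right add_0)
lemma act_zero_l: "act 0 v = 0"
  by (metis act_add_l add_cancel_right_right add_0)
lemma act_neg_r: "act a (- v) = - act a v"
proof -
  have "act a v + act a (- v) = 0" using act_add_r[of a v "-v"] act_zero_r by simp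
  then show ?thesis by (metis minus_unique)
qed
lemma act_neg_l: "act (- a) v = - act a v"
proof -
  have "act a v + act (- a) v = 0" using act_add_l[of a "-a" v] act_zero_l by simp
  then show ?thesis by (metis minus_unique)
qed
lemma act_diff_l: "act (a - b) v = act a v - act b v"
  using act_add_l[of a "-b" v] act_neg_l by simp

lemma act_sum_r: "act a (sum f F) = sum (\<lambda>x. act a (f x)) F"
  by (induct F rule: infinite_finite_induct) (simp_all add: act_zero_r act_add_r)
lemma act_sum_l: "act (sum f F) v = sum (\<lambda>x. act (f x) v) F"
  by (induct F rule: infinite_finite_induct) (simp_all add: act_zero_l act_add_l)

lemma one_G: "1 \<in> G"
proof -
  have "sc 1 = 1" using alg unfolding is_kalg_hom_def by blast
  moreover have "sc 1 \<in> G" using sub unfolding subalg_def by blast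
  ultimately show ?thesis by simp
qed

lemma GG: "two_sided_ideal G G"
proof -
  have "-1 \<in> G" using one_G sub unfolding subalg_def by blast
  then have "1 + -1 \<in> G" using one_G sub unfolding subalg_def by blast
  then have "0 \<in> G" by simp
  then show ?thesis using sub unfolding two_sided_ideal_def subalg_def by blast
qed

lemma blk_sub: "B \<in> blk \<Longrightarrow> B \<subseteq> cfs sc G"
  unfolding blocks_def using in_quotient_imp_subset[OF eqv] by blast

lemma blk_ideal: "B \<in> blk \<Longrightarrow> \<forall>n\<in>B. two_sided_ideal G n"
  using blk_sub unfolding cfs_def maximal_ideal_def by blast

lemma W_ideal: "B \<in> blk \<Longrightarrow> m \<in> Wset G B \<Longrightarrow> two_sided_ideal G m"
  using Wset_ideal[OF GG blk_ideal] by blast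

lemma W_sub: "B \<in> blk \<Longrightarrow> m \<in> Wset G B \<Longrightarrow> m \<subseteq> G"
  using W_ideal unfolding two_sided_ideal_def by blast

lemma cp_iff: "v \<in> cp B \<longleftrightarrow> (\<exists>m\<in>Wset G B. \<forall>x\<in>m. act x v = 0)"
  unfolding comp_def by simp

lemma cp_zero: "0 \<in> cp B"
  unfolding cp_iff using Wset.W_unit act_zero_r by blast

lemma cp_add: assumes "B \<in> blk" "v \<in> cp B" "w \<in> cp B" shows "v + w \<in> cp B"
proof -
  obtain m1 where m1: "m1 \<in> Wset G B" "\<forall>x\<in>m1. act x v = 0" using assms(2) cp_iff by blast
  obtain m2 where m2: "m2 \<in> Wset G B" "\<forall>x\<in>m2. act x w = 0" using assms(3) cp_iff by blast
  obtain m3 where "m3 \<in> Wset G B" "m3 \<subseteq> m1" "m3 \<subseteq> m2"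
    using W_meet[OF GG blk_ideal[OF assms(1)] m1(1) m2(1)] by blast
  then show ?thesis unfolding cp_iff using m1 m2 act_add_r by (metis add_0 subsetD)
qed

lemma cp_neg: assumes "v \<in> cp B" shows "- v \<in> cp B"
  using assms unfolding cp_iff using act_neg_r by (metis neg_equal_0_iff_equal)

lemma cp_act: assumes "B \<in> blk" "g \<in> G" "v \<in> cp B" shows "act g v \<in> cp B"
proof -
  obtain m where m: "m \<in> Wset G B" "\<forall>x\<in>m. act x v = 0" using assms(3) cp_iff by blast
  have "\<forall>x\<in>m. x * g \<in> m" using W_ideal[OF assms(1) m(1)] assms(2) unfolding two_sided_ideal_def by blast
  then have "\<forall>x\<in>m. act x (act g v) = 0" using m(2) act_mult by metis
  then show ?thesis unfolding cp_iff using m(1) by blast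
qed

lemma VD_intro: "finite F \<Longrightarrow> F \<subseteq> D \<Longrightarrow> \<forall>B\<in>F. f B \<in> cp B \<Longrightarrow> sum f F \<in> VV D"
  unfolding VD_def by blast

lemma VD_elim: assumes "u \<in> VV D"
  obtains F f where "finite F" "F \<subseteq> D" "\<forall>B\<in>F. f B \<in> cp B" "u = sum f F"
  using assms unfolding VD_def by blast

lemma VD_zero: "0 \<in> VV D"
  using VD_intro[of "{}" D] by simp

lemma VD_cp: assumes "B \<in> D" "v \<in> cp B" shows "v \<in> VV D"
  using VD_intro[of "{B}" D "\<lambda>_. v"] assms by simp

lemma VD_mono: "D \<subseteq> D' \<Longrightarrow> VV D \<subseteq> VV D'"
  unfolding VD_def by blast

lemma VD_add: assumes D: "D \<subseteq> blk" and u: "u \<in> VV D" and w: "w \<in> VV D" shows "u + w \<in> VV D"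
proof -
  obtain F f where F: "finite F" "F \<subseteq> D" "\<forall>B\<in>F. f B \<in> cp B" "u = sum f F" using u by (rule VD_elim)
  obtain F' g where F': "finite F'" "F' \<subseteq> D" "\<forall>B\<in>F'. g B \<in> cp B" "w = sum g F'" using w by (rule VD_elim)
  define k where "k B = (if B \<in> F then f B else 0) + (if B \<in> F' then g B else 0)" for B
  have fin: "finite (F \<union> F')" using F F' by simp
  have "sum k (F \<union> F') = sum f ((F \<union> F') \<inter> F) + sum g ((F \<union> F') \<inter> F')"
    unfolding k_def sum.distrib sum.inter_restrict[OF fin] by simp
  also have "\<dots> = u + w" using F F' by (simp add: Int_absorb1)
  finally have eq: "sum k (F \<union> F') = u + w" .
  have "\<forall>B\<in>F \<union> F'. k B \<in> cp B"
  proof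
    fix B assume B: "B \<in> F \<union> F'"
    then have "B \<in> blk" using F F' D by blast
    then show "k B \<in> cp B" unfolding k_def using cp_add cp_zero F F' by simp
  qed
  then show ?thesis using VD_intro[OF fin _ , of D k] eq F F' by simp
qed

lemma VD_neg: assumes u: "u \<in> VV D" shows "- u \<in> VV D"
proof -
  obtain F f where F: "finite F" "F \<subseteq> D" "\<forall>B\<in>F. f B \<in> cp B" "u = sum f F" using u by (rule VD_elim)
  have "- u = sum (\<lambda>B. - f B) F" using F by (simp add: sum_negf)
  then show ?thesis using VD_intro[of F D "\<lambda>B. - f B"] F cp_neg by simp
qed

lemma VD_diff: "D \<subseteq> blk \<Longrightarrow> u \<in> VV D \<Longrightarrow> w \<in> VV D \<Longrightarrow> u - w \<in> VV D"
  using VD_add[of D u "- w"] VD_neg[of w D] by simp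

lemma VD_act: assumes D: "D \<subseteq> blk" and g: "g \<in> G" and u: "u \<in> VV D" shows "act g u \<in> VV D"
proof -
  obtain F f where F: "finite F" "F \<subseteq> D" "\<forall>B\<in>F. f B \<in> cp B" "u = sum f F" using u by (rule VD_elim)
  have "act g u = sum (\<lambda>B. act g (f B)) F" using F by (simp add: act_sum_r)
  moreover have "\<forall>B\<in>F. act g (f B) \<in> cp B" using F D cp_act g by blast
  ultimately show ?thesis using VD_intro[of F D "\<lambda>B. act g (f B)"] F by simp
qed

lemma VD_sum: assumes D: "D \<subseteq> blk" shows "finite I \<Longrightarrow> \<forall>i\<in>I. h i \<in> VV D \<Longrightarrow> sum h I \<in> VV D"
  by (induct I rule: finite_induct) (simp_all add: VD_zero VD_add[OF D])

end



context HC begin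

lemma V_decomp: "\<exists>F f. finite F \<and> F \<subseteq> blk \<and> (\<forall>B\<in>F. f B \<in> cp B) \<and> v = sum f F"
proof -
  have "\<forall>v. \<exists>F f. finite F \<and> F \<subseteq> blk \<and> (\<forall>B\<in>F. f B \<in> cp B) \<and> v - sum f F \<in> {0}"
    using conjunct1[OF Vblock[unfolded is_block_mod_def]] .
  then show ?thesis by simp
qed

lemma V_indep: assumes "finite F" "F \<subseteq> blk" "\<forall>B\<in>F. f B \<in> cp B" "sum f F = 0" "B \<in> F" shows "f B = 0"
proof -
  have "\<forall>F f. finite F \<and> F \<subseteq> blk \<and> (\<forall>B\<in>F. f B \<in> cp B) \<and> sum f F \<in> {0} \<longrightarrow> (\<forall>B\<in>F. f B \<in> {0})"
    using conjunct2[OF Vblock[unfolded is_block_mod_def]] .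
  from this[rule_format, of F f] assms show ?thesis by simp
qed

lemma L_split: assumes "D \<subseteq> blk" shows "\<exists>s\<in>VV D. \<exists>t\<in>VV (blk - D). v = s + t"
proof -
  from V_decomp[of v] obtain F f where F0: "finite F \<and> F \<subseteq> blk \<and> (\<forall>B\<in>F. f B \<in> cp B) \<and> v = sum f F"
    by (elim exE)
  then have F: "finite F" "F \<subseteq> blk" "\<forall>B\<in>F. f B \<in> cp B" "v = sum f F" by simp_all
  have "v = sum f (F \<inter> D) + sum f (F - D)" using sum.Int_Diff[OF F(1), of f D] F(4) by simp
  moreover have "sum f (F \<inter> D) \<in> VV D" using F by (intro VD_intro) auto
  moreover have "sum f (F - D) \<in> VV (blk - D)" using F by (intro VD_intro) auto
  ultimately show ?thesis by blast
qed

lemma L_disj: assumes DD: "D \<inter> D' = {}" and D: "D \<subseteq> blk" and D': "D' \<subseteq> blk"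
  and u1: "u \<in> VV D" and u2: "u \<in> VV D'" shows "u = 0"
proof -
  obtain F f where F: "finite F" "F \<subseteq> D" "\<forall>B\<in>F. f B \<in> cp B" "u = sum f F" using u1 by (rule VD_elim)
  obtain F' g where F': "finite F'" "F' \<subseteq> D'" "\<forall>B\<in>F'. g B \<in> cp B" "u = sum g F'" using u2 by (rule VD_elim)
  define k where "k B = (if B \<in> F then f B else - g B)" for B
  have disj: "F \<inter> F' = {}" using F F' DD by blast
  have "sum k (F \<union> F') = sum k F + sum k F'" using F F' disj by (simp add: sum.union_disjoint)
  also have "sum k F = sum f F" unfolding k_def by simp
  also have "sum k F' = sum (\<lambda>B. - g B) F'" unfolding k_def using disj by (intro sum.cong) auto
  finally have s0: "sum k (F \<union> F') = 0" using F F' by (simp add: sum_negf)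
  have kc: "\<forall>B\<in>F \<union> F'. k B \<in> cp B" unfolding k_def using F F' cp_neg by auto
  have "\<forall>B\<in>F. f B = 0"
  proof
    fix B assume B: "B \<in> F"
    have "k B = 0" using V_indep[of "F \<union> F'" k B] F F' D D' kc s0 B by blast
    then show "f B = 0" using B unfolding k_def by simp
  qed
  then show ?thesis using F by simp
qed

lemma absorb: assumes D: "D \<subseteq> blk" and C: "C \<in> D" and m: "m \<in> Wset G C"
  and h: "\<forall>x\<in>m. act x w \<in> VV D" shows "w \<in> VV D"
proof -
  obtain s t where s: "s \<in> VV D" and t: "t \<in> VV (blk - D)" and w: "w = s + t"
    using L_split[OF D] by blast
  have Cb: "C \<in> blk" using C D by blast
  have D2: "blk - D \<subseteq> blk" by blast
  have "\<forall>x\<in>m. act x t = 0"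
  proof
    fix x assume x: "x \<in> m"
    then have xG: "x \<in> G" using W_sub[OF Cb m] by blast
    have "act x t = act x w - act x s" using w act_add_r by simp
    also have "\<dots> \<in> VV D" using VD_diff[OF D] h x VD_act[OF D xG s] by blast
    finally have a: "act x t \<in> VV D" .
    have b: "act x t \<in> VV (blk - D)" using VD_act[OF D2 xG t] .
    show "act x t = 0" using L_disj[of D "blk - D"] D a b by blast
  qed
  then have "t \<in> cp C" unfolding cp_iff using m by blast
  then have "t \<in> VV D" using VD_cp C by blast
  then have "t = 0" using L_disj[of D "blk - D"] D t by blast
  then show ?thesis using w s by simp
qed

lemma LG: assumes y: "y \<in> left_ideal_gen n" and D: "D \<subseteq> blk"
  and h: "\<forall>z\<in>n. \<forall>a. act a (act z v) \<in> VV D" shows "act y v \<in> VV D"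
proof -
  obtain k :: nat and a x where y: "y = (\<Sum>i<k. a i * x i)" "\<forall>i<k. x i \<in> n"
    using assms(1) unfolding left_ideal_gen_def by blast
  have "act y v = (\<Sum>i<k. act (a i) (act (x i) v))" unfolding y by (simp add: act_sum_l act_mult)
  also have "\<dots> \<in> VV D" using y h by (intro VD_sum[OF D]) auto
  finally show ?thesis .
qed

lemma prec_base_sub: "prec_base sc G R \<subseteq> blk \<times> blk"
  unfolding prec_base_def by blast

lemma prec_sub: "prec sc G R \<subseteq> blk \<times> blk"
  unfolding prec_def using trancl_subset_Sigma[OF prec_base_sub] Id_on_subset_Times by blast

lemma prec_refl: "B \<in> blk \<Longrightarrow> (B, B) \<in> prec sc G R"
  unfolding prec_def by blast

lemma base_prec: "p \<in> prec_base sc G R \<Longrightarrow> p \<in> prec sc G R"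
  unfolding prec_def by (simp add: r_into_trancl')

lemma prec_trans: "(a, b) \<in> prec sc G R \<Longrightarrow> (b, c) \<in> prec sc G R \<Longrightarrow> (a, c) \<in> prec sc G R"
  unfolding prec_def by (auto dest: trancl_trans)

lemma prec_Delta: "p \<in> prec sc G R \<Longrightarrow> p \<in> Delta sc G R"
  unfolding prec_def Delta_def using trancl_mono[of p "prec_base sc G R"] by blast

lemma Delta_equiv: "equiv blk (Delta sc G R)"
proof (rule equivI)
  have s: "prec_base sc G R \<union> (prec_base sc G R)\<inverse> \<subseteq> blk \<times> blk" using prec_base_sub by blast
  show "Delta sc G R \<subseteq> blk \<times> blk" unfolding Delta_def using trancl_subset_Sigma[OF s] by blast
  show "refl_on blk (Delta sc G R)" unfolding Delta_def refl_on_def by blast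
  have sy: "sym ((prec_base sc G R \<union> (prec_base sc G R)\<inverse>)\<^sup>+)"
    by (rule sym_trancl) (auto simp: sym_def)
  show "sym (Delta sc G R)" unfolding Delta_def using sy unfolding sym_def by blast
  show "trans (Delta sc G R)" unfolding Delta_def trans_def by (auto dest: trancl_trans)
qed

lemma Q: assumes B: "B \<in> blk" shows "m \<in> Wset G B \<Longrightarrow> \<forall>x\<in>m. act x v = 0 \<Longrightarrow> act a v \<in> VV (prec sc G R `` {B})"
proof (induction m arbitrary: v a rule: Wset.induct)
  have U: "prec sc G R `` {B} \<subseteq> blk" using prec_sub by blast
  case W_unit
  then have "v = 0" using one_G act_one by metis
  then show ?case using act_zero_r VD_zero by simp
next
  have U: "prec sc G R `` {B} \<subseteq> blk" using prec_sub by blast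
  case (W_mult m n)
  have nI: "two_sided_ideal G n" using blk_ideal[OF B] W_mult.hyps by blast
  have H: "\<forall>z\<in>n. \<forall>a. act a (act z v) \<in> VV (prec sc G R `` {B})"
  proof (intro ballI allI)
    fix z a assume z: "z \<in> n"
    have "\<forall>x\<in>m. act x (act z v) = 0"
      using W_mult.prems ideal_prod_single[OF _ z] act_mult by metis
    then show "act a (act z v) \<in> VV (prec sc G R `` {B})" using W_mult.IH by blast
  qed
  have "ideal_prod G n \<in> Wset G B" using W_mult.hyps by (blast intro: Wset.intros)
  then have "is_block_mod sc G R (*) (left_ideal_gen (ideal_prod G n))"
    using hc B unfolding HC_block_subalg_def by blast
  then have bm: "is_block_mod sc G R (*) (left_ideal_gen n)" using ideal_prod_G[OF one_G nI] by simp
  obtain F f where F: "finite F" "F \<subseteq> blk" "\<forall>C\<in>F. f C \<in> comp (*) (left_ideal_gen n) G C"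
      "a - sum f F \<in> left_ideal_gen n"
    using bm unfolding is_block_mod_def by blast
  have "act a v = act (sum f F) v + act (a - sum f F) v" using act_add_l[of "sum f F" "a - sum f F" v] by simp
  also have "\<dots> = sum (\<lambda>C. act (f C) v) F + act (a - sum f F) v" by (simp add: act_sum_l)
  also have "\<dots> \<in> VV (prec sc G R `` {B})"
  proof (rule VD_add[OF U])
    show "act (a - sum f F) v \<in> VV (prec sc G R `` {B})" using LG[OF F(4) U H] .
    show "sum (\<lambda>C. act (f C) v) F \<in> VV (prec sc G R `` {B})"
    proof (rule VD_sum[OF U F(1)], rule ballI)
      fix C assume C: "C \<in> F"
      show "act (f C) v \<in> VV (prec sc G R `` {B})"
      proof (cases "f C \<in> left_ideal_gen n")
        case True
        then show ?thesis using LG[OF _ U H] by blast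
      next
        case False
        have Cb: "C \<in> blk" using C F by blast
        have "C \<in> supp sc G R (*) (left_ideal_gen n)"
          unfolding supp_def using Cb False F(3) C by blast
        then have "(B, C) \<in> prec_base sc G R" unfolding prec_base_def using B Cb W_mult.hyps by blast
        then have CU: "C \<in> prec sc G R `` {B}" using base_prec by blast
        obtain m' where m': "m' \<in> Wset G C" "\<forall>x\<in>m'. x * f C \<in> left_ideal_gen n"
          using F(3) C unfolding comp_def by blast
        have "\<forall>x\<in>m'. act x (act (f C) v) \<in> VV (prec sc G R `` {B})"
        proof
          fix x assume "x \<in> m'"
          then have "act (x * f C) v \<in> VV (prec sc G R `` {B})" using LG[OF _ U H] m' by blast
          then show "act x (act (f C) v) \<in> VV (prec sc G R `` {B})" using act_mult by simp
        qed
        then show ?thesis using absorb[OF U CU m'(1)] by blast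
      qed
    qed
  qed
  finally show ?case .
qed

lemma part1: assumes D: "D \<subseteq> blk" and cl: "\<forall>B C. B \<in> D \<and> (B, C) \<in> prec sc G R \<longrightarrow> C \<in> D"
  shows "is_submod act (VV D)"
  unfolding is_submod_def
proof (intro conjI ballI allI)
  show "0 \<in> VV D" by (rule VD_zero)
  fix x y assume "x \<in> VV D" "y \<in> VV D" then show "x + y \<in> VV D" by (rule VD_add[OF D])
next
  fix a x assume x: "x \<in> VV D"
  obtain F f where F: "finite F" "F \<subseteq> D" "\<forall>B\<in>F. f B \<in> cp B" "x = sum f F" using x by (rule VD_elim)
  have "act a x = sum (\<lambda>B. act a (f B)) F" using F by (simp add: act_sum_r)
  also have "\<dots> \<in> VV D"
  proof (rule VD_sum[OF D F(1)], rule ballI)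
    fix B assume B: "B \<in> F"
    then obtain m where m: "m \<in> Wset G B" "\<forall>x\<in>m. act x (f B) = 0" using F cp_iff by blast
    have Bb: "B \<in> blk" using B F D by blast
    have "act a (f B) \<in> VV (prec sc G R `` {B})" using Q[OF Bb m] .
    moreover have "prec sc G R `` {B} \<subseteq> D" using cl B F by blast
    ultimately show "act a (f B) \<in> VV D" using VD_mono by blast
  qed
  finally show "act a x \<in> VV D" .
qed

end



context HC begin

lemma class_closed: assumes D: "D \<in> blk // Delta sc G R"
  shows "D \<subseteq> blk" "\<forall>B C. B \<in> D \<and> (B, C) \<in> prec sc G R \<longrightarrow> C \<in> D"
proof -
  show "D \<subseteq> blk" using in_quotient_imp_subset[OF Delta_equiv D] .
  show "\<forall>B C. B \<in> D \<and> (B, C) \<in> prec sc G R \<longrightarrow> C \<in> D"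
    using in_quotient_imp_closed[OF Delta_equiv D] prec_Delta by blast
qed

lemma part2a: "\<forall>D \<in> blk // Delta sc G R. is_submod act (VV D)"
proof
  fix D assume D: "D \<in> blk // Delta sc G R"
  show "is_submod act (VV D)" using part1[OF class_closed(1)[OF D] class_closed(2)[OF D]] .
qed

lemma part2b: "is_dsum (blk // Delta sc G R) VV"
  unfolding is_dsum_def
proof (intro conjI allI impI)
  fix v
  from V_decomp[of v] obtain F f where F0: "finite F \<and> F \<subseteq> blk \<and> (\<forall>B\<in>F. f B \<in> cp B) \<and> v = sum f F"
    by (elim exE)
  then have F: "finite F" "F \<subseteq> blk" "\<forall>B\<in>F. f B \<in> cp B" "v = sum f F" by simp_all
  define cl where "cl B = Delta sc G R `` {B}" for B
  define T where "T = cl ` F"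
  define h where "h D = sum f {x \<in> F. cl x = D}" for D
  have fT: "finite T" unfolding T_def using F by simp
  have Tq: "T \<subseteq> blk // Delta sc G R"
  proof
    fix D assume "D \<in> T"
    then obtain x where x: "x \<in> F" "D = cl x" unfolding T_def by blast
    have "x \<in> blk" using x(1) F(2) by blast
    then show "D \<in> blk // Delta sc G R" unfolding x(2) cl_def by (rule quotientI)
  qed
  have gT: "cl ` F \<subseteq> T" unfolding T_def by simp
  have "sum h T = sum f F" unfolding h_def by (rule sum.group[OF F(1) fT gT])
  moreover have "\<forall>D\<in>T. h D \<in> VV D"
  proof
    fix D assume "D \<in> T"
    have "{x \<in> F. cl x = D} \<subseteq> D"
    proof
      fix x assume x: "x \<in> {x \<in> F. cl x = D}"
      then have "x \<in> cl x" unfolding cl_def using equiv_class_self[OF Delta_equiv] F(2) by blast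
      then show "x \<in> D" using x by simp
    qed
    then show "h D \<in> VV D" unfolding h_def using F by (intro VD_intro) auto
  qed
  ultimately show "\<exists>F h. finite F \<and> F \<subseteq> blk // Delta sc G R \<and> (\<forall>i\<in>F. h i \<in> VV i) \<and> v = sum h F"
    using fT Tq F(4) by metis
next
  fix F h
  assume a: "finite F \<and> F \<subseteq> blk // Delta sc G R \<and> (\<forall>i\<in>F. h i \<in> VV i) \<and> sum h F = 0"
  show "\<forall>i\<in>F. h i = 0"
  proof
    fix D0 assume D0: "D0 \<in> F"
    have D0q: "D0 \<in> blk // Delta sc G R" using a D0 by blast
    have D0b: "D0 \<subseteq> blk" using class_closed(1)[OF D0q] .
    have rest: "sum h (F - {D0}) \<in> VV (blk - D0)"
    proof (rule VD_sum)
      show "blk - D0 \<subseteq> blk" by blast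
      show "finite (F - {D0})" using a by simp
      show "\<forall>i\<in>F - {D0}. h i \<in> VV (blk - D0)"
      proof
        fix D assume D: "D \<in> F - {D0}"
        then have Dq: "D \<in> blk // Delta sc G R" using a by blast
        have "D \<inter> D0 = {}" using quotient_disj[OF Delta_equiv Dq D0q] D by blast
        then have "D \<subseteq> blk - D0" using class_closed(1)[OF Dq] by blast
        then show "h D \<in> VV (blk - D0)" using VD_mono a D by blast
      qed
    qed
    have "h D0 + sum h (F - {D0}) = 0" using a D0 sum.remove[of F D0 h] by simp
    then have "h D0 = - sum h (F - {D0})" by (simp add: eq_neg_iff_add_eq_0)
    then have "h D0 \<in> VV (blk - D0)" using VD_neg rest by simp
    moreover have "h D0 \<in> VV D0" using a D0 by blast
    ultimately show "h D0 = 0" using L_disj[of D0 "blk - D0"] D0b by blast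
  qed
qed

lemma part3: assumes ind: "indecomposable act" and B: "B \<in> supp sc G R act {0}"
  shows "supp sc G R act {0} \<subseteq> Delta sc G R `` {B}"
proof
  fix C assume C: "C \<in> supp sc G R act {0}"
  show "C \<in> Delta sc G R `` {B}"
  proof (rule ccontr)
    assume nC: "C \<notin> Delta sc G R `` {B}"
    define D where "D = Delta sc G R `` {B}"
    have Bb: "B \<in> blk" using B unfolding supp_def by blast
    have Cb: "C \<in> blk" using C unfolding supp_def by blast
    have Dq: "D \<in> blk // Delta sc G R" unfolding D_def using Bb by (rule quotientI)
    have Db: "D \<subseteq> blk" using class_closed(1)[OF Dq] .
    have BD: "B \<in> D" unfolding D_def using equiv_class_self[OF Delta_equiv Bb] .
    have S: "is_submod act (VV D)" using part2a Dq by blast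
    have cl2: "\<forall>B1 C1. B1 \<in> blk - D \<and> (B1, C1) \<in> prec sc G R \<longrightarrow> C1 \<in> blk - D"
    proof (intro allI impI)
      fix B1 C1 assume h: "B1 \<in> blk - D \<and> (B1, C1) \<in> prec sc G R"
      have C1b: "C1 \<in> blk" using h prec_sub by blast
      have "C1 \<notin> D"
      proof
        assume "C1 \<in> D"
        then have "(B, C1) \<in> Delta sc G R" unfolding D_def by simp
        moreover have "(C1, B1) \<in> Delta sc G R"
          using prec_Delta h Delta_equiv unfolding equiv_def sym_def by blast
        ultimately have "(B, B1) \<in> Delta sc G R" using Delta_equiv unfolding equiv_def trans_def by blast
        then show False using h unfolding D_def by simp
      qed
      then show "C1 \<in> blk - D" using C1b by blast
    qed
    have T: "is_submod act (VV (blk - D))" using part1[OF _ cl2] by blast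
    obtain v where v: "v \<in> cp B" "v \<noteq> 0" using B unfolding supp_def by blast
    obtain w where w: "w \<in> cp C" "w \<noteq> 0" using C unfolding supp_def by blast
    have "v \<in> VV D" using VD_cp BD v by blast
    then have S0: "VV D \<noteq> {0}" using v by blast
    have "C \<in> blk - D" using Cb nC unfolding D_def by simp
    then have "w \<in> VV (blk - D)" using w(1) by (rule VD_cp)
    then have T0: "VV (blk - D) \<noteq> {0}" using w by blast
    have ST: "VV D \<inter> VV (blk - D) = {0}"
      using L_disj[of D "blk - D"] Db VD_zero by blast
    have sp: "\<forall>v. \<exists>s\<in>VV D. \<exists>t\<in>VV (blk - D). v = s + t" using L_split[OF Db] by blast
    show False using ind S T S0 T0 ST sp unfolding indecomposable_def by blast
  qed
qed

lemma part4_aux: assumes irr: "irreducible_mod act" and B: "B \<in> supp sc G R act {0}"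
  and C: "C \<in> supp sc G R act {0}" shows "(B, C) \<in> prec sc G R"
proof (rule ccontr)
  assume nC: "(B, C) \<notin> prec sc G R"
  define U where "U = prec sc G R `` {B}"
  have Bb: "B \<in> blk" using B unfolding supp_def by blast
  have Cb: "C \<in> blk" using C unfolding supp_def by blast
  have Ub: "U \<subseteq> blk" unfolding U_def using prec_sub by blast
  have cl: "\<forall>B1 C1. B1 \<in> U \<and> (B1, C1) \<in> prec sc G R \<longrightarrow> C1 \<in> U"
    unfolding U_def using prec_trans by blast
  have S: "is_submod act (VV U)" using part1[OF Ub cl] .
  obtain v where v: "v \<in> cp B" "v \<noteq> 0" using B unfolding supp_def by blast
  obtain w where w: "w \<in> cp C" "w \<noteq> 0" using C unfolding supp_def by blast
  have "B \<in> U" unfolding U_def using prec_refl[OF Bb] by simp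
  then have "v \<in> VV U" using VD_cp v by blast
  then have "VV U \<noteq> {0}" using v by blast
  then have "VV U = UNIV" using irr S unfolding irreducible_mod_def by blast
  then have w1: "w \<in> VV U" by simp
  have w2: "w \<in> VV {C}" using VD_cp w by blast
  have "U \<inter> {C} = {}" using nC unfolding U_def by blast
  then have "w = 0" using L_disj[OF _ Ub _ w1 w2] Cb by blast
  then show False using w by blast
qed

lemma part4: assumes irr: "irreducible_mod act" and B: "B \<in> supp sc G R act {0}"
  shows "supp sc G R act {0} \<subseteq> Nabla sc G R `` {B}"
  using part4_aux[OF irr B] part4_aux[OF irr _ B] unfolding Nabla_def by blast

end

theorem mainTheorem19:
  fixes sc :: "'k::field \<Rightarrow> 'a::ring_1" and G :: "'a set" and R :: "('a set \<times> 'a set) set"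
    and act :: "'a \<Rightarrow> 'v::ab_group_add \<Rightarrow> 'v"
  assumes alg: "is_kalg_hom sc"
    and sub: "subalg sc G"
    and eqv: "equiv (cfs sc G) R"
    and hc: "HC_block_subalg sc G R"
    and V: "HC_block_module sc G R act"
  shows "(\<forall>D. D \<subseteq> blocks sc G R \<and> (\<forall>B C. B \<in> D \<and> (B, C) \<in> prec sc G R \<longrightarrow> C \<in> D)
            \<longrightarrow> is_submod act (VD act G D))
       \<and> ((\<forall>D \<in> blocks sc G R // Delta sc G R. is_submod act (VD act G D))
            \<and> is_dsum (blocks sc G R // Delta sc G R) (VD act G))
       \<and> (indecomposable act \<longrightarrow> (\<forall>B \<in> supp sc G R act {0}.
            supp sc G R act {0} \<subseteq> Delta sc G R `` {B}))
       \<and> (irreducible_mod act \<longrightarrow> (\<forall>B \<in> supp sc G R act {0}.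
            supp sc G R act {0} \<subseteq> Nabla sc G R `` {B}))"
proof -
  interpret HC sc G R act using assms by unfold_locales
  have p1: "\<forall>D. D \<subseteq> blk \<and> (\<forall>B C. B \<in> D \<and> (B, C) \<in> prec sc G R \<longrightarrow> C \<in> D)
            \<longrightarrow> is_submod act (VV D)"
    by (intro allI impI, elim conjE, rule part1)
  have p3: "indecomposable act \<longrightarrow> (\<forall>B \<in> supp sc G R act {0}.
            supp sc G R act {0} \<subseteq> Delta sc G R `` {B})"
    by (intro impI ballI, rule part3)
  have p4: "irreducible_mod act \<longrightarrow> (\<forall>B \<in> supp sc G R act {0}.
            supp sc G R act {0} \<subseteq> Nabla sc G R `` {B})"
    by (intro impI ballI, rule part4)
  show ?thesis by (intro conjI p1 part2a part2b p3 p4)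
qed


end
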